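(* Let $X,Y$ be metric spaces, $X\times Y$ with the maximum metric, $\Delta$ a scale and $g,h$ Hausdorff functions. For any set $E\subseteq X\times Y$, $$\mathcal P^{gh}_{\Delta,0}(E)\ge\mathcal P^{h}_{\Delta}(X)\cdot\inf_{x\in X}\underline{\mathcal B}^{g}_0(E_x).$$
   Context: In a metric space $(X,d)$: $\operatorname{gap}F=\inf\{d(x,y):x,y\in F,x\neq y\}$, $C_\delta(E)=\sup\{|F|:F\subseteq E,\operatorname{gap}F>\delta\}$. A Hausdorff function is a nondecreasing $g:(0,\infty)\to(0,\infty)$; $gh$ is the pointwise product. A scale is a set $\Delta\subseteq(0,\infty)$ with $0$ in its closure. A packing is a family $\pi=\{(x_i,r_i):i\in I\}\subseteq X\times(0,\infty)$ with $d(x_i,x_j)>r_i$ for $i\ne j$; it is a packing of $E$ if all $x_i\in E$, $\Delta$-valued if all $r_i\in\Delta$, $\delta$-fine if all $r_i\le\delta$; $g(\pi)=\sum_ig(r_i)$. $\mathcal P^g_{\Delta,0}(E)=\inf_{\delta>0}\sup\{g(\pi):\pi$ a $\Delta$-valued $\delta$-fine packing of $E\}$; $\mathcal P^g_\Delta(E)=\inf\{\sum_n\mathcal P^g_{\Delta,0}(E_n):E\subseteq\bigcup_nE_n\}$ (countable covers); $\underline{\mathcal B}^g_0(E)=\liminf_{\delta\to0}C_\delta(E)g(\delta)$. $E_x=\{y\in Y:(x,y)\in E\}$. *)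

theory Defs
  imports "HOL-Analysis.Analysis"
begin

definition max_dist :: "('a \<Rightarrow> 'a \<Rightarrow> real) \<Rightarrow> ('b \<Rightarrow> 'b \<Rightarrow> real) \<Rightarrow> ('a \<times> 'b) \<Rightarrow> ('a \<times> 'b) \<Rightarrow> real" where
  "max_dist d1 d2 = (\<lambda>(x,y) (x',y'). max (d1 x x') (d2 y y'))"

definition hausdorff_function :: "(real \<Rightarrow> real) \<Rightarrow> bool" where
  "hausdorff_function g \<longleftrightarrow> mono_on {0<..} g \<and> (\<forall>t>0. g t > 0)"

definition scale :: "real set \<Rightarrow> bool" where
  "scale D \<longleftrightarrow> D \<subseteq> {0<..} \<and> 0 \<in> closure D"

definition gap :: "('a \<Rightarrow> 'a \<Rightarrow> real) \<Rightarrow> 'a set \<Rightarrow> ereal" where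
  "gap d F = (INF p \<in> {(x,y). x \<in> F \<and> y \<in> F \<and> x \<noteq> y}. ereal (d (fst p) (snd p)))"

definition capacity :: "('a \<Rightarrow> 'a \<Rightarrow> real) \<Rightarrow> real \<Rightarrow> 'a set \<Rightarrow> ennreal" where
  "capacity d \<delta> E = (SUP F \<in> {F. F \<subseteq> E \<and> gap d F > ereal \<delta>}.
      (if finite F then of_nat (card F) else \<infinity>))"

definition lower_box :: "('a \<Rightarrow> 'a \<Rightarrow> real) \<Rightarrow> (real \<Rightarrow> real) \<Rightarrow> 'a set \<Rightarrow> ennreal" where
  "lower_box d g E = Liminf (at_right 0) (\<lambda>\<delta>. capacity d \<delta> E * ennreal (g \<delta>))"

text \<open>A packing: a family of (centre, radius) pairs with positive radii and
  d(x_i,x_j) > r_i for distinct members (represented as a set of pairs; repeated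
  pairs are impossible anyway).\<close>
definition packing :: "'a set \<Rightarrow> ('a \<Rightarrow> 'a \<Rightarrow> real) \<Rightarrow> ('a \<times> real) set \<Rightarrow> bool" where
  "packing M d \<pi> \<longleftrightarrow> (\<forall>p\<in>\<pi>. fst p \<in> M \<and> snd p > 0) \<and>
     (\<forall>p\<in>\<pi>. \<forall>q\<in>\<pi>. p \<noteq> q \<longrightarrow> d (fst p) (fst q) > snd p)"

definition packing_sum :: "(real \<Rightarrow> real) \<Rightarrow> ('a \<times> real) set \<Rightarrow> ennreal" where
  "packing_sum g \<pi> = (\<Sum>\<^sub>\<infinity> p\<in>\<pi>. ennreal (g (snd p)))"

definition packing_premeasure ::
  "'a set \<Rightarrow> ('a \<Rightarrow> 'a \<Rightarrow> real) \<Rightarrow> (real \<Rightarrow> real) \<Rightarrow> real set \<Rightarrow> 'a set \<Rightarrow> ennreal" where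
  "packing_premeasure M d g D E =
     (INF \<delta> \<in> {0<..}. SUP \<pi> \<in> {\<pi>. packing M d \<pi> \<and> fst ` \<pi> \<subseteq> E \<and> snd ` \<pi> \<subseteq> D
                                   \<and> (\<forall>p\<in>\<pi>. snd p \<le> \<delta>)}. packing_sum g \<pi>)"

definition packing_measure ::
  "'a set \<Rightarrow> ('a \<Rightarrow> 'a \<Rightarrow> real) \<Rightarrow> (real \<Rightarrow> real) \<Rightarrow> real set \<Rightarrow> 'a set \<Rightarrow> ennreal" where
  "packing_measure M d g D E =
     (INF A \<in> {A :: nat \<Rightarrow> 'a set. (\<forall>n. A n \<subseteq> M) \<and> E \<subseteq> (\<Union>n. A n)}.
        (\<Sum>n. packing_premeasure M d g D (A n)))"

definition fiber :: "('a \<times> 'b) set \<Rightarrow> 'a \<Rightarrow> 'b set" where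
  "fiber E x = {y. (x, y) \<in> E}"

end

theory Submission imports Defs begin

definition pkS :: "'a set \<Rightarrow> ('a \<Rightarrow> 'a \<Rightarrow> real) \<Rightarrow> (real \<Rightarrow> real) \<Rightarrow> real set \<Rightarrow> real \<Rightarrow> 'a set \<Rightarrow> ennreal" where
  "pkS M d g D \<delta> E = (SUP \<pi> \<in> {\<pi>. packing M d \<pi> \<and> fst ` \<pi> \<subseteq> E \<and> snd ` \<pi> \<subseteq> D
                                   \<and> (\<forall>p\<in>\<pi>. snd p \<le> \<delta>)}. packing_sum g \<pi>)"

lemma premeasure_pkS: "packing_premeasure M d g D E = (INF \<delta> \<in> {0<..}. pkS M d g D \<delta> E)"
  unfolding packing_premeasure_def pkS_def ..

lemma pkS_mono: "A \<subseteq> B \<Longrightarrow> \<delta> \<le> \<delta>' \<Longrightarrow> pkS M d g D \<delta> A \<le> pkS M d g D \<delta>' B"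
  unfolding pkS_def by (rule SUP_subset_mono) auto

lemma pkS_upper: "packing M d \<pi> \<Longrightarrow> fst ` \<pi> \<subseteq> E \<Longrightarrow> snd ` \<pi> \<subseteq> D \<Longrightarrow> (\<forall>p\<in>\<pi>. snd p \<le> \<delta>)
   \<Longrightarrow> packing_sum g \<pi> \<le> pkS M d g D \<delta> E"
  unfolding pkS_def by (rule SUP_upper) auto

lemma pre_le_pkS: "0 < \<delta> \<Longrightarrow> packing_premeasure M d g D E \<le> pkS M d g D \<delta> E"
  unfolding premeasure_pkS by (rule INF_lower) auto

lemma pre_geI: assumes "0 < \<eta>" "\<And>\<delta>. 0 < \<delta> \<Longrightarrow> \<delta> < \<eta> \<Longrightarrow> z \<le> pkS M d g D \<delta> E"
  shows "z \<le> packing_premeasure M d g D E"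
  unfolding premeasure_pkS
proof (rule INF_greatest)
  fix \<delta> :: real assume "\<delta> \<in> {0<..}"
  hence "z \<le> pkS M d g D (min \<delta> (\<eta>/2)) E" using assms by auto
  also have "\<dots> \<le> pkS M d g D \<delta> E" by (rule pkS_mono) auto
  finally show "z \<le> pkS M d g D \<delta> E" .
qed

lemma pre_mono: "A \<subseteq> B \<Longrightarrow> packing_premeasure M d g D A \<le> packing_premeasure M d g D B"
  unfolding premeasure_pkS by (rule INF_mono) (auto intro: pkS_mono)

lemma pre_empty: "packing_premeasure M d g D {} = 0"
proof -
  have "pkS M d g D 1 {} \<le> 0" unfolding pkS_def packing_sum_def
    by (rule SUP_least) auto
  hence "packing_premeasure M d g D {} \<le> 0" using pre_le_pkS[of 1 M d g D "{}"] by simp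
  thus ?thesis by simp
qed

lemma measure_le_pre: "E \<subseteq> M \<Longrightarrow> packing_measure M d g D E \<le> packing_premeasure M d g D E"
proof -
  assume E: "E \<subseteq> M"
  define A where "A = (\<lambda>n::nat. if n = 0 then E else {})"
  have "packing_measure M d g D E \<le> (\<Sum>n. packing_premeasure M d g D (A n))"
    unfolding packing_measure_def by (rule INF_lower) (use E in \<open>auto simp: A_def split: if_splits\<close>)
  also have "(\<Sum>n. packing_premeasure M d g D (A n)) = packing_premeasure M d g D E"
    by (subst suminf_finite[of "{0}"]) (auto simp: A_def pre_empty)
  finally show ?thesis .
qed

lemma measure_mono: "A \<subseteq> B \<Longrightarrow> packing_measure M d g D A \<le> packing_measure M d g D B"
  unfolding packing_measure_def by (rule INF_mono) blast


lemma SUP_add_le_ennreal: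
  fixes f g :: "_ \<Rightarrow> ennreal"
  assumes "I \<noteq> {}" "J \<noteq> {}" "\<And>i j. i\<in>I \<Longrightarrow> j\<in>J \<Longrightarrow> f i + g j \<le> z"
  shows "(SUP i\<in>I. f i) + (SUP j\<in>J. g j) \<le> z"
proof -
  have "(SUP i\<in>I. f i) + (SUP j\<in>J. g j) = (SUP i\<in>I. f i + (SUP j\<in>J. g j))"
    using ennreal_SUP_add_left[OF assms(1)] by simp
  also have "\<dots> \<le> z"
  proof (rule SUP_least)
    fix i assume i: "i \<in> I"
    have "f i + (SUP j\<in>J. g j) = (SUP j\<in>J. f i + g j)"
      using ennreal_SUP_add_right[OF assms(2)] by simp
    also have "\<dots> \<le> z" using assms(3) i by (auto intro: SUP_least)
    finally show "f i + (SUP j\<in>J. g j) \<le> z" .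
  qed
  finally show ?thesis .
qed

lemma packing_sum_Un: "A \<inter> B = {} \<Longrightarrow> packing_sum g (A \<union> B) = packing_sum g A + packing_sum g B"
  unfolding packing_sum_def by (rule infsum_Un_disjoint) (auto intro: nonneg_summable_on_complete)

lemma pkS_sep:
  assumes ms: "Metric_space M d" and "0 < \<eta>" "\<delta> < \<eta>"
    and sep: "\<forall>a\<in>A. \<forall>b\<in>B. \<eta> \<le> d a b"
  shows "pkS M d g D \<delta> A + pkS M d g D \<delta> B \<le> pkS M d g D \<delta> (A \<union> B)"
  unfolding pkS_def[of M d g D \<delta> A] pkS_def[of M d g D \<delta> B]
proof (rule SUP_add_le_ennreal)
  show "{\<pi>. packing M d \<pi> \<and> fst ` \<pi> \<subseteq> A \<and> snd ` \<pi> \<subseteq> D \<and> (\<forall>p\<in>\<pi>. snd p \<le> \<delta>)} \<noteq> {}"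
  proof -
    have "{} \<in> {\<pi>. packing M d \<pi> \<and> fst ` \<pi> \<subseteq> X \<and> snd ` \<pi> \<subseteq> D \<and> (\<forall>p\<in>\<pi>. snd p \<le> \<delta>)}" for X
      by (simp add: packing_def)
    thus ?thesis by blast
  qed
  show "{\<pi>. packing M d \<pi> \<and> fst ` \<pi> \<subseteq> B \<and> snd ` \<pi> \<subseteq> D \<and> (\<forall>p\<in>\<pi>. snd p \<le> \<delta>)} \<noteq> {}"
  proof -
    have "{} \<in> {\<pi>. packing M d \<pi> \<and> fst ` \<pi> \<subseteq> X \<and> snd ` \<pi> \<subseteq> D \<and> (\<forall>p\<in>\<pi>. snd p \<le> \<delta>)}" for X
      by (simp add: packing_def)
    thus ?thesis by blast
  qed
  fix p1 p2
  assume p1: "p1 \<in> {\<pi>. packing M d \<pi> \<and> fst ` \<pi> \<subseteq> A \<and> snd ` \<pi> \<subseteq> D \<and> (\<forall>p\<in>\<pi>. snd p \<le> \<delta>)}"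
     and p2: "p2 \<in> {\<pi>. packing M d \<pi> \<and> fst ` \<pi> \<subseteq> B \<and> snd ` \<pi> \<subseteq> D \<and> (\<forall>p\<in>\<pi>. snd p \<le> \<delta>)}"
  have disj: "p1 \<inter> p2 = {}"
  proof (rule ccontr)
    assume "p1 \<inter> p2 \<noteq> {}"
    then obtain p where "p \<in> p1" "p \<in> p2" by auto
    hence "fst p \<in> A" "fst p \<in> B" "fst p \<in> M" using p1 p2 by (auto simp: packing_def)
    hence "\<eta> \<le> d (fst p) (fst p)" using sep by auto
    thus False using Metric_space.zero[OF ms, of "fst p" "fst p"] \<open>fst p \<in> M\<close> \<open>0 < \<eta>\<close> by simp
  qed
  have pk: "packing M d (p1 \<union> p2)"
    unfolding packing_def
  proof (intro conjI ballI impI)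
    fix p assume "p \<in> p1 \<union> p2" thus "fst p \<in> M" "0 < snd p" using p1 p2 by (auto simp: packing_def)
  next
    fix p q assume pq: "p \<in> p1 \<union> p2" "q \<in> p1 \<union> p2" "p \<noteq> q"
    show "snd p < d (fst p) (fst q)"
    proof -
      { assume "p \<in> p1" "q \<in> p1" hence ?thesis using p1 pq by (auto simp: packing_def) }
      moreover
      { assume "p \<in> p2" "q \<in> p2" hence ?thesis using p2 pq by (auto simp: packing_def) }
      moreover
      { assume "p \<in> p1" "q \<in> p2"
        hence "fst p \<in> A" "fst q \<in> B" "snd p \<le> \<delta>" using p1 p2 by auto
        hence "\<eta> \<le> d (fst p) (fst q)" "snd p \<le> \<delta>" using sep by auto
        hence ?thesis using \<open>\<delta> < \<eta>\<close> by linarith }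
      moreover
      { assume "p \<in> p2" "q \<in> p1"
        hence "fst q \<in> A" "fst p \<in> B" "snd p \<le> \<delta>" using p1 p2 by auto
        hence "\<eta> \<le> d (fst q) (fst p)" "snd p \<le> \<delta>" using sep by auto
        hence ?thesis using \<open>\<delta> < \<eta>\<close> Metric_space.commute[OF ms] by (metis less_le_trans order_le_less_trans) }
      ultimately show ?thesis using pq by blast
    qed
  qed
  have "packing_sum g p1 + packing_sum g p2 = packing_sum g (p1 \<union> p2)"
    using packing_sum_Un[OF disj] by simp
  also have "\<dots> \<le> pkS M d g D \<delta> (A \<union> B)"
    by (rule pkS_upper) (use pk p1 p2 in auto)
  finally show "packing_sum g p1 + packing_sum g p2 \<le> pkS M d g D \<delta> (A \<union> B)" .
qed

lemma pre_sep:
  assumes ms: "Metric_space M d" and "0 < \<eta>"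
    and sep: "\<forall>a\<in>A. \<forall>b\<in>B. \<eta> \<le> d a b"
  shows "packing_premeasure M d g D A + packing_premeasure M d g D B \<le> packing_premeasure M d g D (A \<union> B)"
proof (rule pre_geI[OF \<open>0 < \<eta>\<close>])
  fix \<delta> :: real assume "0 < \<delta>" "\<delta> < \<eta>"
  have "packing_premeasure M d g D A + packing_premeasure M d g D B \<le> pkS M d g D \<delta> A + pkS M d g D \<delta> B"
    using pre_le_pkS[OF \<open>0<\<delta>\<close>] by (intro add_mono) blast+
  also have "\<dots> \<le> pkS M d g D \<delta> (A \<union> B)" by (rule pkS_sep) (use assms \<open>\<delta> < \<eta>\<close> in auto)
  finally show "packing_premeasure M d g D A + packing_premeasure M d g D B \<le> pkS M d g D \<delta> (A \<union> B)" .
qed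


lemma ennreal_lt_add_pos: "x < top \<Longrightarrow> 0 < e \<Longrightarrow> x < x + ennreal e"
  by (cases x rule: ennreal_cases) (auto simp flip: ennreal_plus intro: ennreal_lessI)

lemma geom_ennreal: "(\<Sum>n. ennreal (e * (1/2)^Suc n)) = ennreal e" if "0 \<le> e"
proof -
  have s: "(\<lambda>n. e * (1/2::real)^Suc n) sums (e * 1)"
    by (rule sums_mult[OF power_half_series])
  have "(\<Sum>n. ennreal (e * (1/2)^Suc n)) = ennreal (\<Sum>n. e * (1/2)^Suc n)"
    by (rule suminf_ennreal2) (use that s in \<open>auto simp: sums_iff\<close>)
  also have "(\<Sum>n. e * (1/2::real)^Suc n) = e" using s by (simp add: sums_iff)
  finally show ?thesis .
qed

lemma meas_csa:
  assumes B: "\<forall>n. B n \<subseteq> M"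
  shows "packing_measure M d g D (\<Union>n. B n) \<le> (\<Sum>n. packing_measure M d g D (B n))"
proof (rule ennreal_le_epsilon)
  fix e :: real assume fin: "(\<Sum>n. packing_measure M d g D (B n)) < top" and e: "0 < e"
  let ?P = "packing_measure M d g D" and ?Q = "packing_premeasure M d g D"
  have ex: "\<forall>n. \<exists>C. (\<forall>k. C k \<subseteq> M) \<and> B n \<subseteq> (\<Union>k. C k) \<and> (\<Sum>k. ?Q (C k)) < ?P (B n) + ennreal (e * (1/2)^Suc n)"
  proof
    fix n
    have "?P (B n) < top" using ennreal_suminf_lessD[OF fin] .
    hence "?P (B n) < ?P (B n) + ennreal (e * (1/2)^Suc n)"
      by (rule ennreal_lt_add_pos) (use e in simp)
    thus "\<exists>C. (\<forall>k. C k \<subseteq> M) \<and> B n \<subseteq> (\<Union>k. C k) \<and> (\<Sum>k. ?Q (C k)) < ?P (B n) + ennreal (e * (1/2)^Suc n)"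
      unfolding packing_measure_def[of M d g D "B n"] INF_less_iff by auto
  qed
  obtain C where C0: "\<forall>n. (\<forall>k. C n k \<subseteq> M) \<and> B n \<subseteq> (\<Union>k. C n k) \<and>
       (\<Sum>k. ?Q (C n k)) < ?P (B n) + ennreal (e * (1/2)^Suc n)"
    using choice[OF ex] by blast
  note C = C0[rule_format]
  define C' where "C' m = (case prod_decode m of (n, k) \<Rightarrow> C n k)" for m
  have "?P (\<Union>n. B n) \<le> (\<Sum>m. ?Q (C' m))"
    unfolding packing_measure_def
  proof (rule INF_lower, safe)
    fix m show "x \<in> C' m \<Longrightarrow> x \<in> M" for x using C by (auto simp: C'_def split: prod.splits)
  next
    fix x n assume "x \<in> B n"
    then obtain k where "x \<in> C n k" using conjunct1[OF conjunct2[OF C[of n]]] by blast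
    hence "x \<in> C' (prod_encode (n, k))" by (simp add: C'_def)
    thus "x \<in> (\<Union>m. C' m)" by blast
  qed
  also have "(\<Sum>m. ?Q (C' m)) = (\<Sum>n. \<Sum>k. ?Q (C n k))"
  proof -
    have "(\<Sum>m. (\<lambda>(n,k). ?Q (C n k)) (prod_decode m)) = (\<Sum>n. \<Sum>k. ?Q (C n k))"
      by (rule suminf_ennreal_2dimen) simp
    moreover have "(\<lambda>m. (\<lambda>(n,k). ?Q (C n k)) (prod_decode m)) = (\<lambda>m. ?Q (C' m))"
      by (auto simp: C'_def split: prod.splits)
    ultimately show ?thesis by simp
  qed
  also have "\<dots> \<le> (\<Sum>n. ?P (B n) + ennreal (e * (1/2)^Suc n))"
    by (rule suminf_le) (use C in \<open>auto intro: less_imp_le\<close>)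
  also have "\<dots> = (\<Sum>n. ?P (B n)) + ennreal e"
  proof -
    have "(\<Sum>n. ?P (B n) + ennreal (e * (1/2)^Suc n)) = (\<Sum>n. ?P (B n)) + (\<Sum>n. ennreal (e * (1/2)^Suc n))"
      by (rule suminf_add[symmetric]) auto
    moreover have "(\<Sum>n. ennreal (e * (1/2)^Suc n)) = ennreal e" by (rule geom_ennreal) (use e in linarith)
    ultimately show ?thesis by (simp only:)
  qed
  finally show "?P (\<Union>n. B n) \<le> (\<Sum>n. ?P (B n)) + ennreal e" .
qed

lemma meas_empty: "packing_measure M d g D {} = 0"
  using measure_le_pre[of "{}" M d g D] pre_empty[of M d g D] by simp

lemma meas_Un:
  assumes "A \<subseteq> M" "B \<subseteq> M"
  shows "packing_measure M d g D (A \<union> B) \<le> packing_measure M d g D A + packing_measure M d g D B"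
proof -
  define F where "F n = (if n = 0 then A else if n = 1 then B else {})" for n :: nat
  have "A \<union> B = (\<Union>n. F n)" by (auto simp: F_def split: if_splits)
  hence "packing_measure M d g D (A \<union> B) \<le> (\<Sum>n. packing_measure M d g D (F n))"
    using meas_csa[of F M d g D] assms by (simp add: F_def)
  also have "(\<Sum>n. packing_measure M d g D (F n)) = (\<Sum>n\<in>{0,1}. packing_measure M d g D (F n))"
    by (rule suminf_finite) (auto simp: F_def meas_empty)
  finally show ?thesis by (simp add: F_def)
qed


lemma meas_sep:
  assumes ms: "Metric_space M d" and "0 < \<eta>" and sep: "\<forall>a\<in>A. \<forall>b\<in>B. \<eta> \<le> d a b"
  shows "packing_measure M d g D A + packing_measure M d g D B \<le> packing_measure M d g D (A \<union> B)"
  unfolding packing_measure_def[of M d g D "A \<union> B"]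
proof (rule INF_greatest, clarify)
  fix C :: "nat \<Rightarrow> 'a set" assume C: "\<forall>n. C n \<subseteq> M" "A \<union> B \<subseteq> (\<Union>n. C n)"
  let ?Q = "packing_premeasure M d g D"
  have "packing_measure M d g D A \<le> (\<Sum>n. ?Q (C n \<inter> A))"
    unfolding packing_measure_def by (rule INF_lower) (use C in auto)
  moreover have "packing_measure M d g D B \<le> (\<Sum>n. ?Q (C n \<inter> B))"
    unfolding packing_measure_def by (rule INF_lower) (use C in auto)
  ultimately have "packing_measure M d g D A + packing_measure M d g D B \<le> (\<Sum>n. ?Q (C n \<inter> A)) + (\<Sum>n. ?Q (C n \<inter> B))"
    by (rule add_mono)
  also have "\<dots> = (\<Sum>n. ?Q (C n \<inter> A) + ?Q (C n \<inter> B))" by (simp add: suminf_add)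
  also have "\<dots> \<le> (\<Sum>n. ?Q (C n))"
  proof (rule suminf_le)
    fix n
    have "?Q (C n \<inter> A) + ?Q (C n \<inter> B) \<le> ?Q ((C n \<inter> A) \<union> (C n \<inter> B))"
      by (rule pre_sep[OF ms \<open>0<\<eta>\<close>]) (use sep in auto)
    also have "\<dots> \<le> ?Q (C n)" by (rule pre_mono) auto
    finally show "?Q (C n \<inter> A) + ?Q (C n \<inter> B) \<le> ?Q (C n)" .
  qed auto
  finally show "packing_measure M d g D A + packing_measure M d g D B \<le> (\<Sum>n. ?Q (C n))" .
qed

lemma meas_sep_sum:
  fixes n :: nat
  assumes ms: "Metric_space M d" and pos: "\<And>n. 0 < \<eta> n"
    and sep: "\<And>k n x y. k < n \<Longrightarrow> x \<in> B k \<Longrightarrow> y \<in> B n \<Longrightarrow> \<eta> n \<le> d x y"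
  shows "(\<Sum>k<n. packing_measure M d g D (B k)) \<le> packing_measure M d g D (\<Union>k<n. B k)"
proof (induction n)
  case 0 show ?case by simp
next
  case (Suc n)
  have "(\<Sum>k<Suc n. packing_measure M d g D (B k)) = (\<Sum>k<n. packing_measure M d g D (B k)) + packing_measure M d g D (B n)"
    by simp
  also have "\<dots> \<le> packing_measure M d g D (\<Union>k<n. B k) + packing_measure M d g D (B n)"
    using Suc by (rule add_right_mono)
  also have "\<dots> \<le> packing_measure M d g D ((\<Union>k<n. B k) \<union> B n)"
    by (rule meas_sep[OF ms pos]) (use sep in blast)
  also have "(\<Union>k<n. B k) \<union> B n = (\<Union>k<Suc n. B k)" by (auto simp: lessThan_Suc)
  finally show ?case .
qed

lemma nat_step_exists: "\<not> P N \<Longrightarrow> P m \<Longrightarrow> N \<le> m \<Longrightarrow> \<exists>k. N \<le> k \<and> k < m \<and> \<not> P k \<and> P (Suc k)"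
proof (induction m)
  case 0 thus ?case by auto
next
  case (Suc m)
  show ?case
  proof (cases "N = Suc m")
    case True thus ?thesis using Suc by auto
  next
    case N: False
    show ?thesis
    proof (cases "P m")
      case True
      have "N \<le> m" using N Suc.prems by auto
      then obtain k where "N \<le> k \<and> k < m \<and> \<not> P k \<and> P (Suc k)" using Suc.IH[OF Suc.prems(1) True] by blast
      thus ?thesis by (intro exI[of _ k]) auto
    next
      case False
      have "N \<le> m" using N Suc.prems by auto
      thus ?thesis using False Suc.prems by (intro exI[of _ m]) auto
    qed
  qed
qed


lemma sep_arith:
  fixes i j :: nat and a b c :: real
  assumes "i + 2 \<le> j" "1 / real (Suc (Suc i)) \<le> a" "b < 1 / real (Suc j)" "a \<le> c + b"
  shows "1 / (real j * real (Suc j)) \<le> c"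
proof -
  have j: "real j \<ge> real i + 2" "real j > 0" using assms(1) by auto
  have "1 / real j \<le> 1 / real (Suc (Suc i))" using j by (intro divide_left_mono) auto
  hence "1 / real j - 1 / real (Suc j) \<le> c" using assms(2-4) by linarith
  moreover have "1 / real j - 1 / real (Suc j) = 1 / (real j * real (Suc j))"
    using j by (simp add: field_simps)
  ultimately show ?thesis by simp
qed

lemma caratheodory_closed:
  assumes ms: "Metric_space M d" and CM: "C \<subseteq> M" and TM: "T \<subseteq> M"
    and closedC: "\<forall>x\<in>M - C. \<exists>\<epsilon>>0. \<forall>c\<in>C. \<epsilon> \<le> d x c"
  shows "packing_measure M d g D (T \<inter> C) + packing_measure M d g D (T - C) \<le> packing_measure M d g D T"
proof (rule ennreal_le_epsilon)
  fix e :: real assume Tfin: "packing_measure M d g D T < top" and e: "0 < e"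
  let ?P = "packing_measure M d g D"
  define Tk where "Tk k = {x \<in> T - C. \<forall>c\<in>C. 1 / real (Suc k) \<le> d x c}" for k
  define R where "R k = Tk (Suc k) - Tk k" for k
  have Tk_mono: "Tk k \<subseteq> Tk m" if "k \<le> m" for k m
  proof -
    have "1 / real (Suc m) \<le> 1 / real (Suc k)" using that by (intro divide_left_mono) auto
    thus ?thesis unfolding Tk_def by force
  qed
  have TkM: "Tk k \<subseteq> M" "R k \<subseteq> M" for k using TM by (auto simp: Tk_def R_def)
  have part1: "?P (T \<inter> C) + ?P (Tk k) \<le> ?P T" for k
  proof -
    have "?P (T \<inter> C) + ?P (Tk k) \<le> ?P ((T \<inter> C) \<union> Tk k)"
      by (rule meas_sep[OF ms, of "1 / real (Suc k)"]) (auto simp: Tk_def Metric_space.commute[OF ms])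
    also have "\<dots> \<le> ?P T" by (rule measure_mono) (auto simp: Tk_def)
    finally show ?thesis .
  qed
  have sepR: "1 / (real j * real (Suc j)) \<le> d x y" if "i + 2 \<le> j" "x \<in> R i" "y \<in> R j" for i j x y
  proof -
    have y: "y \<in> T - C" "y \<notin> Tk j" using that by (auto simp: R_def Tk_def)
    then obtain c where c: "c \<in> C" "d y c < 1 / real (Suc j)" unfolding Tk_def by force
    have x: "1 / real (Suc (Suc i)) \<le> d x c" "x \<in> M" using that c TM by (auto simp: R_def Tk_def)
    have "d x c \<le> d x y + d y c"
      using Metric_space.triangle[OF ms, of x y c] x y c CM TM by auto
    thus ?thesis using sep_arith[OF that(1) x(1) c(2)] by simp
  qed
  define \<eta> where "\<eta> n = 1 / (real (2*n+2) * real (2*n+3))" for n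
  have \<eta>pos: "0 < \<eta> n" for n by (simp add: \<eta>_def)
  have \<eta>le: "\<eta> n \<le> 1 / (real j * real (Suc j))" if "j = 2*n \<or> j = 2*n+1" "0 < j" for n j
    unfolding \<eta>_def using that by (intro divide_left_mono mult_mono) auto
  have even: "(\<Sum>k<n. ?P (R (2*k))) \<le> ?P T" for n
  proof -
    have "(\<Sum>k<n. ?P (R (2*k))) \<le> ?P (\<Union>k<n. R (2*k))"
    proof (rule meas_sep_sum[OF ms \<eta>pos])
      fix k n x y assume "k < n" "x \<in> R (2*k)" "y \<in> R (2*n)"
      hence "1 / (real (2*n) * real (Suc (2*n))) \<le> d x y" by (intro sepR[of "2*k"]) auto
      moreover have "\<eta> n \<le> 1 / (real (2*n) * real (Suc (2*n)))" using \<open>k<n\<close> by (intro \<eta>le) auto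
      ultimately show "\<eta> n \<le> d x y" by linarith
    qed
    also have "\<dots> \<le> ?P T" by (rule measure_mono) (auto simp: R_def Tk_def)
    finally show ?thesis .
  qed
  have odd: "(\<Sum>k<n. ?P (R (2*k+1))) \<le> ?P T" for n
  proof -
    have "(\<Sum>k<n. ?P (R (2*k+1))) \<le> ?P (\<Union>k<n. R (2*k+1))"
    proof (rule meas_sep_sum[OF ms \<eta>pos])
      fix k n x y assume "k < n" "x \<in> R (2*k+1)" "y \<in> R (2*n+1)"
      hence "1 / (real (2*n+1) * real (Suc (2*n+1))) \<le> d x y" by (intro sepR[of "2*k+1"]) auto
      moreover have "\<eta> n \<le> 1 / (real (2*n+1) * real (Suc (2*n+1)))" by (intro \<eta>le) auto
      ultimately show "\<eta> n \<le> d x y" by linarith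
    qed
    also have "\<dots> \<le> ?P T" by (rule measure_mono) (auto simp: R_def Tk_def)
    finally show ?thesis .
  qed
  have split2: "(\<Sum>k<2*n. f k) = (\<Sum>k<n. f (2*k)) + (\<Sum>k<n. f (2*k+1))" for n and f :: "nat \<Rightarrow> ennreal"
    by (induction n) (auto simp: algebra_simps)
  define S where "S = (\<Sum>k. ?P (R k))"
  have S_le: "S \<le> ?P T + ?P T"
    unfolding S_def suminf_eq_SUP
  proof (rule SUP_least)
    fix n
    have "(\<Sum>k<n. ?P (R k)) \<le> (\<Sum>k<2*n. ?P (R k))" by (rule sum_mono2) auto
    also have "\<dots> \<le> ?P T + ?P T" unfolding split2 by (intro add_mono even odd)
    finally show "(\<Sum>k<n. ?P (R k)) \<le> ?P T + ?P T" .
  qed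
  have "?P T + ?P T < top" using Tfin by (metis ennreal_add_eq_top less_top)
  hence Sfin: "S < top" using S_le by (meson order.strict_trans1)
  have "\<exists>N. (\<Sum>k. ?P (R (k + N))) \<le> ennreal e"
  proof (rule ccontr)
    assume "\<not> ?thesis"
    hence big: "ennreal e < (\<Sum>k. ?P (R (k + N)))" for N by (simp add: not_le)
    have "(\<Sum>k<N. ?P (R k)) + ennreal e \<le> S" for N
    proof -
      have "S = (\<Sum>k. ?P (R (k + N))) + (\<Sum>k<N. ?P (R k))"
        unfolding S_def by (rule suminf_offset) simp
      thus ?thesis using big[of N] by (simp add: add.commute add_left_mono less_imp_le)
    qed
    hence "(SUP N. (\<Sum>k<N. ?P (R k))) + ennreal e \<le> S"
      by (subst ennreal_SUP_add_left[symmetric]) (auto intro: SUP_least)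
    hence "S + ennreal e \<le> S" unfolding S_def suminf_eq_SUP .
    thus False using Sfin e
      by (cases S rule: ennreal_cases) (auto simp flip: ennreal_plus)
  qed
  then obtain N where N: "(\<Sum>k. ?P (R (k + N))) \<le> ennreal e" by blast
  have cover: "T - C \<subseteq> Tk N \<union> (\<Union>k. R (k + N))"
  proof
    fix x assume x: "x \<in> T - C"
    show "x \<in> Tk N \<union> (\<Union>k. R (k + N))"
    proof (cases "x \<in> Tk N")
      case False
      obtain \<epsilon> where \<epsilon>: "\<epsilon> > 0" "\<forall>c\<in>C. \<epsilon> \<le> d x c" using closedC x TM by blast
      obtain m0 where m0: "inverse (real (Suc m0)) < \<epsilon>" using reals_Archimedean[OF \<epsilon>(1)] by blast
      define m where "m = max m0 N"
      have "1 / real (Suc m) \<le> 1 / real (Suc m0)" unfolding m_def by (intro divide_left_mono) auto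
      hence "x \<in> Tk m" using x \<epsilon> m0 unfolding Tk_def by (force simp: inverse_eq_divide)
      then obtain k where k: "N \<le> k" "\<not> x \<in> Tk k" "x \<in> Tk (Suc k)"
        using nat_step_exists[of "\<lambda>k. x \<in> Tk k" N m] False by (auto simp: m_def)
      hence "x \<in> R ((k - N) + N)" by (simp add: R_def)
      thus ?thesis by blast
    qed simp
  qed
  have "?P (T - C) \<le> ?P (Tk N \<union> (\<Union>k. R (k + N)))" by (rule measure_mono[OF cover])
  also have "\<dots> \<le> ?P (Tk N) + ?P (\<Union>k. R (k + N))" by (rule meas_Un) (use TkM in auto)
  also have "\<dots> \<le> ?P (Tk N) + (\<Sum>k. ?P (R (k + N)))" by (intro add_left_mono meas_csa) (use TkM in auto)
  also have "\<dots> \<le> ?P (Tk N) + ennreal e" using N by (rule add_left_mono)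
  finally have "?P (T \<inter> C) + ?P (T - C) \<le> ?P (T \<inter> C) + ?P (Tk N) + ennreal e"
    by (simp add: add.assoc add_left_mono)
  also have "\<dots> \<le> ?P T + ennreal e" using part1[of N] by (rule add_right_mono)
  finally show "?P (T \<inter> C) + ?P (T - C) \<le> ?P T + ennreal e" .
qed


definition mcl :: "'a set \<Rightarrow> ('a \<Rightarrow> 'a \<Rightarrow> real) \<Rightarrow> 'a set \<Rightarrow> 'a set" where
  "mcl M d A = {x \<in> M. \<forall>\<epsilon>>0. \<exists>a\<in>A. d x a < \<epsilon>}"

lemma mcl_sub: "Metric_space M d \<Longrightarrow> A \<subseteq> M \<Longrightarrow> A \<subseteq> mcl M d A"
proof
  fix x assume ms: "Metric_space M d" and AM: "A \<subseteq> M" and x: "x \<in> A"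
  hence "d x x = 0" using Metric_space.zero[OF ms] by auto
  thus "x \<in> mcl M d A" unfolding mcl_def using x AM by (auto intro!: bexI[of _ x])
qed

lemma mcl_mono: "A \<subseteq> B \<Longrightarrow> mcl M d A \<subseteq> mcl M d B"
  unfolding mcl_def by blast

lemma mcl_M: "mcl M d A \<subseteq> M" unfolding mcl_def by blast

lemma mcl_closed:
  assumes ms: "Metric_space M d" and AM: "A \<subseteq> M"
  shows "\<forall>x\<in>M - mcl M d A. \<exists>\<epsilon>>0. \<forall>c\<in>mcl M d A. \<epsilon> \<le> d x c"
proof
  fix x assume x: "x \<in> M - mcl M d A"
  then obtain \<epsilon> where \<epsilon>: "\<epsilon> > 0" "\<forall>a\<in>A. \<epsilon> \<le> d x a" unfolding mcl_def by (auto simp: not_less)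
  have "\<epsilon>/2 \<le> d x c" if c: "c \<in> mcl M d A" for c
  proof (rule ccontr)
    assume "\<not> ?thesis"
    hence lt: "d x c < \<epsilon>/2" by simp
    have cc: "\<forall>e>0. \<exists>a\<in>A. d c a < e" using c by (simp add: mcl_def)
    have "\<epsilon>/2 > 0" using \<epsilon>(1) by simp
    then obtain a where a: "a \<in> A" "d c a < \<epsilon>/2" using cc by blast
    have "c \<in> M" using c by (simp add: mcl_def)
    have "a \<in> M" using a AM by auto
    have "d x a \<le> d x c + d c a" using Metric_space.triangle[OF ms] x \<open>c\<in>M\<close> \<open>a\<in>M\<close> by auto
    moreover have "\<epsilon> \<le> d x a" using \<epsilon>(2) a(1) by blast
    ultimately show False using lt a(2) by linarith
  qed
  thus "\<exists>\<epsilon>>0. \<forall>c\<in>mcl M d A. \<epsilon> \<le> d x c" using \<epsilon>(1) by (intro exI[of _ "\<epsilon>/2"]) auto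
qed


lemma finite_pos_margin:
  assumes "finite F" "\<And>p q. p \<in> F \<Longrightarrow> q \<in> F \<Longrightarrow> p \<noteq> q \<Longrightarrow> (0::real) < f p q"
  shows "\<exists>m>0. \<forall>p\<in>F. \<forall>q\<in>F. p \<noteq> q \<longrightarrow> m \<le> f p q"
proof -
  define S where "S = (\<lambda>(p,q). f p q) ` {pq \<in> F \<times> F. fst pq \<noteq> snd pq}"
  have fin: "finite S" unfolding S_def using assms(1) by auto
  show ?thesis
  proof (cases "S = {}")
    case True thus ?thesis by (intro exI[of _ 1]) (auto simp: S_def)
  next
    case False
    have "Min S \<in> S" using fin False by (rule Min_in)
    hence pos: "0 < Min S" using assms(2) by (auto simp: S_def)
    show ?thesis
    proof (intro exI[of _ "Min S"] conjI pos ballI impI)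
      fix p q assume "p \<in> F" "q \<in> F" "p \<noteq> q"
      hence "f p q \<in> S" by (force simp: S_def)
      thus "Min S \<le> f p q" using fin by simp
    qed
  qed
qed

lemma pkS_closure:
  assumes ms: "Metric_space M d" and AM: "A \<subseteq> M"
  shows "pkS M d g D \<delta> (mcl M d A) \<le> pkS M d g D \<delta> A"
  unfolding pkS_def[of M d g D \<delta> "mcl M d A"]
proof (rule SUP_least, clarify)
  fix \<pi> assume \<pi>: "packing M d \<pi>" "fst ` \<pi> \<subseteq> mcl M d A" "snd ` \<pi> \<subseteq> D" "\<forall>p\<in>\<pi>. snd p \<le> \<delta>"
  have "packing_sum g \<pi> = (SUP F\<in>{F. finite F \<and> F \<subseteq> \<pi>}. sum (\<lambda>p. ennreal (g (snd p))) F)"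
    unfolding packing_sum_def by (rule nonneg_infsum_complete) simp
  also have "\<dots> \<le> pkS M d g D \<delta> A"
  proof (rule SUP_least, clarify)
    fix F assume F: "finite F" "F \<subseteq> \<pi>"
    have "0 < d (fst p) (fst q) - snd p" if "p \<in> F" "q \<in> F" "p \<noteq> q" for p q
    proof -
      have "p \<in> \<pi>" "q \<in> \<pi>" using that F(2) by auto
      thus ?thesis using \<pi>(1) that(3) unfolding packing_def by auto
    qed
    note pos = this
    obtain m where
      m: "m > 0" "\<forall>p\<in>F. \<forall>q\<in>F. p \<noteq> q \<longrightarrow> m \<le> d (fst p) (fst q) - snd p"
      using finite_pos_margin[of F "\<lambda>p q. d (fst p) (fst q) - snd p", OF F(1) pos] by blast
    have "\<forall>p\<in>F. \<exists>a. a \<in> A \<and> d (fst p) a < m/2"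
    proof
      fix p assume "p \<in> F"
      hence "fst p \<in> mcl M d A" using \<pi>(2) F(2) by auto
      hence "\<forall>e>0. \<exists>a\<in>A. d (fst p) a < e" by (simp add: mcl_def)
      moreover have "m/2 > 0" using m(1) by simp
      ultimately show "\<exists>a. a \<in> A \<and> d (fst p) a < m/2" by blast
    qed
    from bchoice[OF this] obtain a where a0: "\<forall>p\<in>F. a p \<in> A \<and> d (fst p) (a p) < m/2" by blast
    have a: "a p \<in> A \<and> d (fst p) (a p) < m/2" if "p \<in> F" for p using a0 that by blast
    have fM: "fst p \<in> M" if "p \<in> F" for p using \<pi>(1) F(2) that by (auto simp: packing_def)
    have aM: "a p \<in> M" if "p \<in> F" for p using a[OF that] AM by auto
    have key: "snd p < d (a p) (a q)" if pq: "p \<in> F" "q \<in> F" "p \<noteq> q" for p q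
    proof -
      have "d (fst p) (fst q) \<le> d (fst p) (a p) + d (a p) (fst q)"
        by (rule Metric_space.triangle[OF ms fM[OF pq(1)] aM[OF pq(1)] fM[OF pq(2)]])
      also have "d (a p) (fst q) \<le> d (a p) (a q) + d (a q) (fst q)"
        by (rule Metric_space.triangle[OF ms aM[OF pq(1)] aM[OF pq(2)] fM[OF pq(2)]])
      finally have "d (fst p) (fst q) \<le> d (fst p) (a p) + (d (a p) (a q) + d (a q) (fst q))" by simp
      moreover have "d (a q) (fst q) < m/2" using a[OF pq(2)] Metric_space.commute[OF ms, of "a q" "fst q"] by simp
      moreover have "d (fst p) (a p) < m/2" using a[OF pq(1)] by simp
      moreover have "m \<le> d (fst p) (fst q) - snd p" using m pq by auto
      ultimately show ?thesis by linarith
    qed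
    define \<pi>' where "\<pi>' = (\<lambda>p. (a p, snd p)) ` F"
    have inj: "inj_on (\<lambda>p. (a p, snd p)) F"
    proof (rule inj_onI, rule ccontr)
      fix p q assume pq: "p \<in> F" "q \<in> F" "(a p, snd p) = (a q, snd q)" "p \<noteq> q"
      hence "snd p < d (a p) (a p)" using key[of p q] by simp
      moreover have "snd p > 0" using \<pi>(1) F(2) pq by (auto simp: packing_def)
      moreover have "d (a p) (a p) = 0" using Metric_space.zero[OF ms aM[OF pq(1)] aM[OF pq(1)]] by simp
      ultimately show False by linarith
    qed
    have pk: "packing M d \<pi>'"
      unfolding packing_def \<pi>'_def
    proof (intro conjI ballI impI)
      fix p' assume "p' \<in> (\<lambda>p. (a p, snd p)) ` F"
      then obtain p where "p \<in> F" "p' = (a p, snd p)" by blast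
      thus "fst p' \<in> M" "0 < snd p'" using aM \<pi>(1) F(2) by (auto simp: packing_def)
    next
      fix p' q' assume "p' \<in> (\<lambda>p. (a p, snd p)) ` F" "q' \<in> (\<lambda>p. (a p, snd p)) ` F" "p' \<noteq> q'"
      then obtain p q where "p \<in> F" "q \<in> F" "p' = (a p, snd p)" "q' = (a q, snd q)" "p \<noteq> q" by blast
      thus "snd p' < d (fst p') (fst q')" using key by simp
    qed
    have "sum (\<lambda>p. ennreal (g (snd p))) F = sum (\<lambda>p. ennreal (g (snd p))) \<pi>'"
      unfolding \<pi>'_def by (subst sum.reindex[OF inj]) (simp add: o_def)
    also have "\<dots> = packing_sum g \<pi>'" unfolding packing_sum_def using F(1) \<pi>'_def by simp
    also have "\<dots> \<le> pkS M d g D \<delta> A"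
      by (rule pkS_upper[OF pk]) (use a \<pi> F in \<open>force simp: \<pi>'_def\<close>)+
    finally show "sum (\<lambda>p. ennreal (g (snd p))) F \<le> pkS M d g D \<delta> A" .
  qed
  finally show "packing_sum g \<pi> \<le> pkS M d g D \<delta> A" .
qed

lemma pre_closure:
  assumes ms: "Metric_space M d" and AM: "A \<subseteq> M"
  shows "packing_premeasure M d g D (mcl M d A) \<le> packing_premeasure M d g D A"
  unfolding premeasure_pkS by (rule INF_mono) (use pkS_closure[OF ms AM] in auto)


lemma meas_incr_le_pre:
  assumes ms: "Metric_space M d" and XM: "\<And>n. X n \<subseteq> M" and inc: "\<And>n. X n \<subseteq> X (Suc n)"
  shows "packing_measure M d g D (\<Union>n. X n) \<le> (SUP n. packing_premeasure M d g D (X n))"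
proof -
  let ?P = "packing_measure M d g D" and ?Q = "packing_premeasure M d g D"
  define F where "F n = mcl M d (X n)" for n
  have Finc: "F n \<subseteq> F (Suc n)" for n unfolding F_def by (rule mcl_mono[OF inc])
  have FM: "F n \<subseteq> M" for n unfolding F_def by (rule mcl_M)
  define Dd where "Dd n = (case n of 0 \<Rightarrow> F 0 | Suc k \<Rightarrow> F (Suc k) - F k)" for n
  have DdM: "Dd n \<subseteq> M" for n using FM by (auto simp: Dd_def split: nat.splits)
  have cover: "(\<Union>n. X n) \<subseteq> (\<Union>n. Dd n)"
  proof
    fix x assume "x \<in> (\<Union>n. X n)"
    then obtain n where "x \<in> X n" by blast
    hence xF: "x \<in> F n" using mcl_sub[OF ms XM] by (auto simp: F_def)
    show "x \<in> (\<Union>n. Dd n)"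
    proof (cases "x \<in> F 0")
      case True thus ?thesis by (intro UN_I[of 0]) (auto simp: Dd_def)
    next
      case False
      then obtain k where "x \<notin> F k" "x \<in> F (Suc k)"
        using nat_step_exists[of "\<lambda>k. x \<in> F k" 0 n] xF by auto
      thus ?thesis by (intro UN_I[of "Suc k"]) (auto simp: Dd_def)
    qed
  qed
  have partial: "(\<Sum>n<Suc N. ?P (Dd n)) \<le> ?P (F N)" for N
  proof (induction N)
    case 0 show ?case by (simp add: Dd_def)
  next
    case (Suc N)
    have "(\<Sum>n<Suc (Suc N). ?P (Dd n)) = (\<Sum>n<Suc N. ?P (Dd n)) + ?P (F (Suc N) - F N)"
      by (simp add: Dd_def)
    also have "\<dots> \<le> ?P (F (Suc N) \<inter> F N) + ?P (F (Suc N) - F N)"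
      using Suc Finc[of N] by (simp add: Int_absorb1)
    also have "\<dots> \<le> ?P (F (Suc N))"
      by (rule caratheodory_closed[OF ms FM FM]) (unfold F_def, rule mcl_closed[OF ms XM])
    finally show ?case .
  qed
  have "?P (\<Union>n. X n) \<le> ?P (\<Union>n. Dd n)" by (rule measure_mono[OF cover])
  also have "\<dots> \<le> (\<Sum>n. ?P (Dd n))" by (rule meas_csa) (use DdM in auto)
  also have "\<dots> = (SUP N. \<Sum>n<N. ?P (Dd n))" by (rule suminf_eq_SUP)
  also have "\<dots> \<le> (SUP n. ?Q (X n))"
  proof (rule SUP_least)
    fix N
    have "(\<Sum>n<N. ?P (Dd n)) \<le> (\<Sum>n<Suc N. ?P (Dd n))" by (rule sum_mono2) auto
    also have "\<dots> \<le> ?P (F N)" by (rule partial)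
    also have "\<dots> \<le> ?Q (F N)" by (rule measure_le_pre[OF FM])
    also have "\<dots> \<le> ?Q (X N)" unfolding F_def by (rule pre_closure[OF ms XM])
    also have "\<dots> \<le> (SUP n. ?Q (X n))" by (rule SUP_upper) auto
    finally show "(\<Sum>n<N. ?P (Dd n)) \<le> (SUP n. ?Q (X n))" .
  qed
  finally show ?thesis .
qed


lemma gap_lt: "ereal t < gap d G \<Longrightarrow> y \<in> G \<Longrightarrow> y' \<in> G \<Longrightarrow> y \<noteq> y' \<Longrightarrow> t < d y y'"
proof -
  assume a: "ereal t < gap d G" "y \<in> G" "y' \<in> G" "y \<noteq> y'"
  have le: "gap d G \<le> ereal (d y y')" unfolding gap_def
    by (rule INF_lower2[of "(y,y')"]) (use a in auto)
  have "ereal t < ereal (d y y')" using order.strict_trans2[OF a(1) le] .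
  thus ?thesis by simp
qed

lemma gap_subset: "G' \<subseteq> G \<Longrightarrow> gap d G \<le> gap d G'"
  unfolding gap_def by (rule INF_superset_mono) auto

lemma cap_witness:
  assumes lt: "ennreal r < capacity d t F * ennreal gt" and gt: "0 < gt"
  shows "\<exists>G. finite G \<and> G \<subseteq> F \<and> ereal t < gap d G \<and> ennreal r \<le> of_nat (card G) * ennreal gt"
proof -
  have "capacity d t F * ennreal gt = (SUP G\<in>{G. G \<subseteq> F \<and> gap d G > ereal t}.
      (if finite G then of_nat (card G) else \<infinity>) * ennreal gt)"
    unfolding capacity_def by (rule SUP_mult_right_ennreal)
  with lt obtain G where G: "G \<subseteq> F" "gap d G > ereal t"
      "ennreal r < (if finite G then of_nat (card G) else \<infinity>) * ennreal gt"
    by (auto simp: less_SUP_iff)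
  show ?thesis
  proof (cases "finite G")
    case True thus ?thesis using G by (intro exI[of _ G]) auto
  next
    case False
    obtain n :: nat where n: "r / gt \<le> real n" using real_arch_simple by blast
    obtain G' where G': "G' \<subseteq> G" "finite G'" "card G' = n"
      using infinite_arbitrarily_large[OF False] by blast
    have "r \<le> real n * gt" using n gt by (simp add: field_simps)
    hence "ennreal r \<le> ennreal (real n * gt)" by (rule ennreal_leI)
    also have "\<dots> = of_nat (card G') * ennreal gt"
      using gt G' by (simp add: ennreal_mult ennreal_of_nat_eq_real_of_nat)
    finally show ?thesis
      using G G' gap_subset[of G' G d] by (intro exI[of _ G']) auto
  qed
qed


lemma product_packing:
  assumes EXY: "E \<subseteq> X \<times> Y" and AX: "A \<subseteq> X"
    and gpos: "\<And>t. 0 < t \<Longrightarrow> 0 < g t" and hpos: "\<And>t. 0 < t \<Longrightarrow> 0 < h t"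
    and good: "\<And>x t. x \<in> A \<Longrightarrow> 0 < t \<Longrightarrow> t \<le> \<delta> \<Longrightarrow> ennreal r < capacity dY t (fiber E x) * ennreal (g t)"
  shows "ennreal r * pkS X dX h D \<delta> A \<le> pkS (X \<times> Y) (max_dist dX dY) (\<lambda>t. g t * h t) D \<delta> E"
  unfolding pkS_def[of X dX h D \<delta> A] SUP_mult_left_ennreal
proof (rule SUP_least, clarify)
  fix \<pi> assume \<pi>: "packing X dX \<pi>" "fst ` \<pi> \<subseteq> A" "snd ` \<pi> \<subseteq> D" "\<forall>p\<in>\<pi>. snd p \<le> \<delta>"
  let ?R = "pkS (X \<times> Y) (max_dist dX dY) (\<lambda>t. g t * h t) D \<delta> E"
  have "ennreal r * packing_sum h \<pi> = ennreal r * (SUP F\<in>{F. finite F \<and> F \<subseteq> \<pi>}. sum (\<lambda>p. ennreal (h (snd p))) F)"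
    unfolding packing_sum_def by (subst nonneg_infsum_complete) simp_all
  also have "\<dots> = (SUP F\<in>{F. finite F \<and> F \<subseteq> \<pi>}. ennreal r * sum (\<lambda>p. ennreal (h (snd p))) F)"
    by (rule SUP_mult_left_ennreal)
  also have "\<dots> \<le> ?R"
  proof (rule SUP_least, clarify)
    fix F assume F: "finite F" "F \<subseteq> \<pi>"
    have pF: "fst p \<in> A" "0 < snd p" "snd p \<le> \<delta>" "snd p \<in> D" "fst p \<in> X" if "p \<in> F" for p
    proof -
      have p: "p \<in> \<pi>" using F that by auto
      show "fst p \<in> A" "snd p \<in> D" using p \<pi>(2,3) by auto
      show "0 < snd p" "fst p \<in> X" using p \<pi>(1) by (auto simp: packing_def)
      show "snd p \<le> \<delta>" using p \<pi>(4) by auto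
    qed
    have "\<forall>p\<in>F. \<exists>G. finite G \<and> G \<subseteq> fiber E (fst p) \<and> ereal (snd p) < gap dY G \<and>
          ennreal r \<le> of_nat (card G) * ennreal (g (snd p))"
    proof
      fix p assume p: "p \<in> F"
      show "\<exists>G. finite G \<and> G \<subseteq> fiber E (fst p) \<and> ereal (snd p) < gap dY G \<and>
          ennreal r \<le> of_nat (card G) * ennreal (g (snd p))"
        by (rule cap_witness[OF good[OF pF(1)[OF p] pF(2)[OF p] pF(3)[OF p]] gpos[OF pF(2)[OF p]]])
    qed
    from bchoice[OF this] obtain G where G0: "\<forall>p\<in>F. finite (G p) \<and> G p \<subseteq> fiber E (fst p) \<and> ereal (snd p) < gap dY (G p) \<and>
          ennreal r \<le> of_nat (card (G p)) * ennreal (g (snd p))" by blast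
    have G: "finite (G p) \<and> G p \<subseteq> fiber E (fst p) \<and> ereal (snd p) < gap dY (G p) \<and>
          ennreal r \<le> of_nat (card (G p)) * ennreal (g (snd p))" if pin: "p \<in> F" for p
      using G0 pin by blast
    define \<phi> where "\<phi> = (\<lambda>(p::'a \<times> real, y::'b). ((fst p, y), snd p))"
    define \<pi>' where "\<pi>' = \<phi> ` (SIGMA p:F. G p)"
    have inj: "inj_on \<phi> (SIGMA p:F. G p)"
    proof (rule inj_onI)
      fix z z' assume "z \<in> (SIGMA p:F. G p)" "z' \<in> (SIGMA p:F. G p)" "\<phi> z = \<phi> z'"
      thus "z = z'" by (cases z, cases z') (simp add: \<phi>_def prod_eq_iff)
    qed
    have finS: "finite (SIGMA p:F. G p)" using F(1) G by auto
    have pk: "packing (X \<times> Y) (max_dist dX dY) \<pi>'"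
      unfolding packing_def
    proof (intro conjI ballI impI)
      fix q assume "q \<in> \<pi>'"
      then obtain z where z: "z \<in> (SIGMA p:F. G p)" "q = \<phi> z" unfolding \<pi>'_def by blast
      obtain p y where zz: "z = (p, y)" by (cases z)
      have py: "p \<in> F" "y \<in> G p" "q = ((fst p, y), snd p)" using z zz by (auto simp: \<phi>_def)
      hence "(fst p, y) \<in> E" using G[OF py(1)] by (auto simp: fiber_def)
      thus "fst q \<in> X \<times> Y" "0 < snd q" using py EXY pF by auto
    next
      fix q q' assume qq: "q \<in> \<pi>'" "q' \<in> \<pi>'" "q \<noteq> q'"
      obtain z where z: "z \<in> (SIGMA p:F. G p)" "q = \<phi> z" using qq(1) unfolding \<pi>'_def by blast
      obtain p y where zz: "z = (p, y)" by (cases z)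
      obtain z' where z': "z' \<in> (SIGMA p:F. G p)" "q' = \<phi> z'" using qq(2) unfolding \<pi>'_def by blast
      obtain p' y' where zz': "z' = (p', y')" by (cases z')
      have py: "p \<in> F" "y \<in> G p" "q = ((fst p, y), snd p)"
          "p' \<in> F" "y' \<in> G p'" "q' = ((fst p', y'), snd p')" using z zz z' zz' by (auto simp: \<phi>_def)
      show "snd q < max_dist dX dY (fst q) (fst q')"
      proof (cases "p = p'")
        case True
        hence "y \<noteq> y'" using qq py by auto
        hence "snd p < dY y y'" using gap_lt[of "snd p" dY "G p" y y'] G[OF py(1)] py True by auto
        thus ?thesis using py by (simp add: max_dist_def)
      next
        case False
        hence "snd p < dX (fst p) (fst p')" using \<pi>(1) F(2) py unfolding packing_def by auto
        thus ?thesis using py by (simp add: max_dist_def)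
      qed
    qed
    have mem: "\<exists>p y. p \<in> F \<and> y \<in> G p \<and> q = ((fst p, y), snd p)" if qin: "q \<in> \<pi>'" for q
    proof -
      obtain z where z: "z \<in> (SIGMA p:F. G p)" "q = \<phi> z" using qin unfolding \<pi>'_def by blast
      obtain p y where zz: "z = (p, y)" by (cases z)
      thus ?thesis using z zz by (auto simp: \<phi>_def)
    qed
    have sub1: "fst q \<in> E \<and> snd q \<in> D \<and> snd q \<le> \<delta>" if qin: "q \<in> \<pi>'" for q
    proof -
      obtain p y where py: "p \<in> F" "y \<in> G p" "q = ((fst p, y), snd p)" using mem[OF qin] by blast
      have "y \<in> fiber E (fst p)" using G[OF py(1)] py(2) by blast
      thus ?thesis using py pF[OF py(1)] by (simp add: fiber_def)
    qed
    have sub: "fst ` \<pi>' \<subseteq> E" "snd ` \<pi>' \<subseteq> D" "\<forall>q\<in>\<pi>'. snd q \<le> \<delta>"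
      using sub1 by auto
    have "ennreal r * sum (\<lambda>p. ennreal (h (snd p))) F = (\<Sum>p\<in>F. ennreal r * ennreal (h (snd p)))"
      by (rule sum_distrib_left)
    also have "\<dots> \<le> (\<Sum>p\<in>F. of_nat (card (G p)) * ennreal (g (snd p) * h (snd p)))"
    proof (rule sum_mono)
      fix p assume p: "p \<in> F"
      have "ennreal r * ennreal (h (snd p)) \<le> of_nat (card (G p)) * ennreal (g (snd p)) * ennreal (h (snd p))"
        using G[OF p] by (intro mult_right_mono) auto
      also have "\<dots> = of_nat (card (G p)) * ennreal (g (snd p) * h (snd p))"
        using gpos hpos pF[OF p] by (simp add: ennreal_mult mult.assoc less_imp_le)
      finally show "ennreal r * ennreal (h (snd p)) \<le> of_nat (card (G p)) * ennreal (g (snd p) * h (snd p))" .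
    qed
    also have "\<dots> = (\<Sum>p\<in>F. \<Sum>y\<in>G p. ennreal (g (snd p) * h (snd p)))"
      by simp
    also have "\<dots> = (\<Sum>(p,y)\<in>(SIGMA p:F. G p). ennreal (g (snd p) * h (snd p)))"
      by (rule sum.Sigma) (use F G in auto)
    also have "\<dots> = (\<Sum>q\<in>\<pi>'. ennreal (g (snd q) * h (snd q)))"
      unfolding \<pi>'_def by (subst sum.reindex[OF inj]) (simp add: \<phi>_def split_beta)
    also have "\<dots> = packing_sum (\<lambda>t. g t * h t) \<pi>'"
      unfolding packing_sum_def using finS \<pi>'_def by simp
    also have "\<dots> \<le> ?R" by (rule pkS_upper[OF pk sub])
    finally show "ennreal r * sum (\<lambda>p. ennreal (h (snd p))) F \<le> ?R" .
  qed
  finally show "ennreal r * packing_sum h \<pi> \<le> ?R" .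
qed


theorem lemma3p1:
  fixes X :: "'a set" and dX :: "'a \<Rightarrow> 'a \<Rightarrow> real"
    and Y :: "'b set" and dY :: "'b \<Rightarrow> 'b \<Rightarrow> real"
    and D :: "real set" and g h :: "real \<Rightarrow> real" and E :: "('a \<times> 'b) set"
  assumes "Metric_space X dX" and "Metric_space Y dY"
    and "scale D" and "hausdorff_function g" and "hausdorff_function h"
    and "E \<subseteq> X \<times> Y"
  shows "packing_premeasure (X \<times> Y) (max_dist dX dY) (\<lambda>t. g t * h t) D E
           \<ge> packing_measure X dX h D X * (INF x \<in> X. lower_box dY g (fiber E x))"
proof -
  note msX = assms(1) and EXY = assms(6)
  have gpos: "\<And>t. 0 < t \<Longrightarrow> 0 < g t" and hpos: "\<And>t. 0 < t \<Longrightarrow> 0 < h t"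
    using assms(4,5) by (auto simp: hausdorff_function_def)
  let ?Q = "packing_premeasure (X \<times> Y) (max_dist dX dY) (\<lambda>t. g t * h t) D E"
  let ?PX = "packing_measure X dX h D X"
  let ?I = "INF x \<in> X. lower_box dY g (fiber E x)"
  have main: "?PX * c \<le> ?Q" if cI: "c < ?I" for c
  proof -
    have "c < top" using cI by (rule order.strict_trans2) simp
    then obtain r where r: "c = ennreal r" "0 \<le> r"
      by (cases c rule: ennreal_cases) auto
    show ?thesis
    proof (cases "r = 0")
      case True thus ?thesis using r by simp
    next
      case False
      define Xn where "Xn n = {x \<in> X. \<forall>t. 0 < t \<longrightarrow> t \<le> 1 / real (Suc n) \<longrightarrow>
          c < capacity dY t (fiber E x) * ennreal (g t)}" for n
      have XnX: "Xn n \<subseteq> X" for n by (auto simp: Xn_def)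
      have Xninc: "Xn n \<subseteq> Xn (Suc n)" for n
      proof
        fix x assume x: "x \<in> Xn n"
        have le: "1 / real (Suc (Suc n)) \<le> 1 / real (Suc n)" by (intro divide_left_mono) auto
        show "x \<in> Xn (Suc n)" unfolding Xn_def
        proof (intro CollectI conjI allI impI)
          show "x \<in> X" using x by (simp add: Xn_def)
          fix t :: real assume "0 < t" "t \<le> 1 / real (Suc (Suc n))"
          hence "t \<le> 1 / real (Suc n)" using le by linarith
          thus "c < capacity dY t (fiber E x) * ennreal (g t)" using x \<open>0 < t\<close> by (simp add: Xn_def)
        qed
      qed
      have Xcov: "X \<subseteq> (\<Union>n. Xn n)"
      proof
        fix x assume x: "x \<in> X"
        have "?I \<le> lower_box dY g (fiber E x)" using x by (rule INF_lower)
        hence clt: "c < Liminf (at_right 0) (\<lambda>t. capacity dY t (fiber E x) * ennreal (g t))"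
          using cI unfolding lower_box_def by (rule order.strict_trans2[rotated])
        have "\<forall>y<Liminf (at_right (0::real)) (\<lambda>t. capacity dY t (fiber E x) * ennreal (g t)).
               eventually (\<lambda>t. y < capacity dY t (fiber E x) * ennreal (g t)) (at_right 0)"
          using le_Liminf_iff[of "Liminf (at_right (0::real)) (\<lambda>t. capacity dY t (fiber E x) * ennreal (g t))"
                  "at_right (0::real)" "\<lambda>t. capacity dY t (fiber E x) * ennreal (g t)"] by simp
        hence "eventually (\<lambda>t. c < capacity dY t (fiber E x) * ennreal (g t)) (at_right 0)"
          using clt by blast
        then obtain b where b: "b > 0" "\<forall>t>0. t < b \<longrightarrow> c < capacity dY t (fiber E x) * ennreal (g t)"
          unfolding eventually_at_right_field by auto
        obtain n where n: "inverse (real (Suc n)) < b" using reals_Archimedean[OF b(1)] by blast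
        have "x \<in> Xn n" unfolding Xn_def
        proof (intro CollectI conjI allI impI)
          show "x \<in> X" by (rule x)
          fix t :: real assume t: "0 < t" "t \<le> 1 / real (Suc n)"
          hence "t < b" using n by (simp add: inverse_eq_divide)
          thus "c < capacity dY t (fiber E x) * ennreal (g t)" using b t by blast
        qed
        thus "x \<in> (\<Union>n. Xn n)" by blast
      qed
      have K: "packing_premeasure X dX h D (Xn n) * c \<le> ?Q" for n
        unfolding premeasure_pkS[of "X \<times> Y"]
      proof (rule INF_greatest)
        fix \<delta> :: real assume "\<delta> \<in> {0<..}"
        define \<delta>' where "\<delta>' = min \<delta> (1 / real (Suc n))"
        have \<delta>': "0 < \<delta>'" using \<open>\<delta> \<in> {0<..}\<close> by (auto simp: \<delta>'_def)
        have "packing_premeasure X dX h D (Xn n) * c \<le> pkS X dX h D \<delta>' (Xn n) * c"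
          by (intro mult_right_mono pre_le_pkS[OF \<delta>']) auto
        also have "\<dots> = ennreal r * pkS X dX h D \<delta>' (Xn n)" using r by (simp add: mult.commute)
        also have "\<dots> \<le> pkS (X \<times> Y) (max_dist dX dY) (\<lambda>t. g t * h t) D \<delta>' E"
          by (rule product_packing[OF EXY XnX gpos hpos]) (use r in \<open>auto simp: Xn_def \<delta>'_def\<close>)
        also have "\<dots> \<le> pkS (X \<times> Y) (max_dist dX dY) (\<lambda>t. g t * h t) D \<delta> E"
          by (rule pkS_mono) (auto simp: \<delta>'_def)
        finally show "packing_premeasure X dX h D (Xn n) * c \<le> pkS (X \<times> Y) (max_dist dX dY) (\<lambda>t. g t * h t) D \<delta> E" .
      qed
      have "?PX \<le> packing_measure X dX h D (\<Union>n. Xn n)" by (rule measure_mono[OF Xcov])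
      also have "\<dots> \<le> (SUP n. packing_premeasure X dX h D (Xn n))"
        by (rule meas_incr_le_pre[where X=Xn, OF msX XnX Xninc])
      finally have "?PX * c \<le> (SUP n. packing_premeasure X dX h D (Xn n)) * c"
        by (rule mult_right_mono) simp
      also have "\<dots> = (SUP n. packing_premeasure X dX h D (Xn n) * c)"
        by (rule SUP_mult_right_ennreal)
      also have "\<dots> \<le> ?Q" using K by (auto intro: SUP_least)
      finally show ?thesis .
    qed
  qed
  have "?PX * ?I = ?PX * Sup {..<?I}" by simp
  also have "\<dots> = (SUP c\<in>{..<?I}. ?PX * c)"
    using SUP_mult_left_ennreal[of ?PX id "{..<?I}"] by simp
  also have "\<dots> \<le> ?Q" using main by (auto intro: SUP_least)
  finally show ?thesis .
qed

end
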